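(* Any GET operation by client $c$ on a key $k$ of partition $p$ in which the client sends $hrv = hrm[:,p]$ (its current row for partition $p$ of the highest-read matrix) satisfies per-key monotonic-read consistency: if the operation is issued at time $t$ and served by server $s$, which reads the value of $k$ at time $t'$, then every $w\in ClientReads(c,k,t)$ is included in $CommittedWrites(s,k,t')$.
   Context: System model. Data is replicated in $D$ datacenters and split into $P$ partitions. In each datacenter $d$, each partition is replicated by a Raft group with a leader $L_d$; Raft guarantees that all members of a group commit the same totally ordered sequence of log entries, each with a log index, in increasing index order. Every version $v$ of a key carries a value, an originating datacenter $v.dc\_id$, the log index $idx(v)$ it received in the Raft log of its originating datacenter, and a hybrid logical clock (HLC) timestamp $v.t=\langle l,c\rangle$; HLC timestamps are compared lexicographically. Writes committed in the group of datacenter $d$ that originated at $d$ are forwarded, in commit order, over FIFO channels to the leaders of the same partition in every other datacenter, which append them (carrying their original index $idx(v)$) to their own Raft logs. Each server $s$ keeps a vector $sv$ of length $D$, initially zero; when $s$ commits a version $v$ it sets $sv[v.dc\_id]:=idx(v)$ and adds $v$ to the version chain of its key. Client protocol. Each client $c$ keeps $D\times P$ matrices $hrm$ (highest read) and $hwm$ (highest write), initially zero, and HLC timestamps $dt_r,dt_w$, initially zero. GET of key $k$ in partition $p$: the client sends vectors $hrv,hwv$ of length $D$ (each either the zero vector or $hrm[:,p]$, resp. $hwm[:,p]$); the server blocks while there is $i$ with $sv[i]<hrv[i]$ or $sv[i]<hwv[i]$; it then returns the version $v$ of $k$ in its version chain with the largest timestamp, together with $v.dc\_id$, $sv[v.dc\_id]$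 and $v.t$; the client sets $hrm[v.dc\_id,p]:=\max(hrm[v.dc\_id,p],sv[v.dc\_id])$ and $dt_r:=\max(dt_r,v.t)$. PUT of key $k$ in partition $p$ at leader $L_d$: the client sends a dependency timestamp $dt$ (one of $0$, $dt_r$, $dt_w$, $\max(dt_r,dt_w)$); the leader updates its HLC $\langle l,c\rangle$ with $dt$ by the rule: $l':=l$; $l:=\max(l',pt,dt.l)$ where $pt$ is its physical clock; then $c:=\max(c,dt.c)+1$ if $l=l'=dt.l$, else $c:=c+1$ if $l=l'$, else $c:=dt.c+1$ if $l=dt.l$, else $c:=0$; it timestamps the new version with the updated HLC value $t$ and $dc\_id=d$, appends it to the Raft log, and after commit replies with $d$, $sv[d]$ and $t$; the client sets $hwm[d,p]:=\max(hwm[d,p],sv[d])$ and $dt_w:=\max(dt_w,t)$. Definitions. $CommittedWrites(s,k,t)$ is the ordered sequence of all writes of key $k$ committed at server $s$ by time $t$; $ClientWrites(c,k,t)$ is the ordered sequence of all writes of $k$ done by client $c$ by time $t$; $ClientReads(c,k,t)$ is the set of writes whose value of $k$ has been read by client $c$ by time $t$. *)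

theory Defs
  imports Main "HOL-Library.Product_Lexorder"
begin

text \<open>HLC timestamps are pairs (l, c) of naturals, compared lexicographically
  (the linear order on pairs comes from HOL-Library.Product_Lexorder).\<close>
type_synonym hlc = "nat \<times> nat"

text \<open>HLC update rule of the leader, given its current clock (l,c), its
  physical clock pt and the client dependency timestamp dt.\<close>
definition hlc_update :: "hlc \<Rightarrow> nat \<Rightarrow> hlc \<Rightarrow> hlc" where
  "hlc_update lc pt dt =
     (let l' = fst lc; c = snd lc; dl = fst dt; dc = snd dt;
          l = max (max l' pt) dl;
          c2 = (if l = l' \<and> l' = dl then max c dc + 1
                else if l = l' then c + 1
                else if l = dl then dc + 1
                else 0)
      in (l, c2))"

text \<open>A version: key, value, originating datacenter, log index in the Raft
  log of its originating datacenter, HLC timestamp.\<close>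
record ('k, 'v) version =
  vkey :: 'k
  vval :: 'v
  vdc  :: nat
  vidx :: nat
  vts  :: hlc

text \<open>Servers are triples (d, p, m): member m of the Raft group replicating
  partition p in datacenter d; member 0 is the leader L_d.\<close>
type_synonym server = "nat \<times> nat \<times> nat"

datatype ('k, 'v) pending =
    PGet server 'k "nat \<Rightarrow> nat" "nat \<Rightarrow> nat"   \<comment> \<open>server, key, hrv, hwv\<close>
  | PPut server "('k, 'v) version"

record ('c, 'k, 'v) state =
  rlog  :: "nat \<times> nat \<Rightarrow> ('k, 'v) version list"  \<comment> \<open>Raft log of group (d,p)\<close>
  cmt   :: "server \<Rightarrow> nat"           \<comment> \<open>number of log entries committed at a server\<close>
  sv    :: "server \<Rightarrow> nat \<Rightarrow> nat"
  clk   :: "nat \<times> nat \<Rightarrow> hlc"         \<comment> \<open>HLC of leader of group (d,p)\<close>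
  fwd   :: "nat \<times> nat \<times> nat \<Rightarrow> nat"  \<comment> \<open>(d,d',p): entries received so far on FIFO channel d to d'\<close>
  hrm   :: "'c \<Rightarrow> nat \<times> nat \<Rightarrow> nat"  \<comment> \<open>hrm of client, indexed (dc, partition)\<close>
  hwm   :: "'c \<Rightarrow> nat \<times> nat \<Rightarrow> nat"
  dtr   :: "'c \<Rightarrow> hlc"
  dtw   :: "'c \<Rightarrow> hlc"
  pend  :: "'c \<Rightarrow> ('k, 'v) pending option"
  creads :: "'c \<Rightarrow> ('k, 'v) version set"

definition init_state :: "('c, 'k, 'v) state" where
  "init_state = \<lparr> rlog = (\<lambda>_. []), cmt = (\<lambda>_. 0), sv = (\<lambda>_ _. 0), clk = (\<lambda>_. (0, 0)),
     fwd = (\<lambda>_. 0), hrm = (\<lambda>_ _. 0), hwm = (\<lambda>_ _. 0), dtr = (\<lambda>_. (0, 0)),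
     dtw = (\<lambda>_. (0, 0)), pend = (\<lambda>_. None), creads = (\<lambda>_. {}) \<rparr>"

text \<open>Committed prefix of the log at a server (Raft: members commit the same
  sequence, in increasing index order).\<close>
definition committed :: "('c, 'k, 'v) state \<Rightarrow> server \<Rightarrow> ('k, 'v) version list" where
  "committed \<sigma> s = take (cmt \<sigma> s) (rlog \<sigma> (fst s, fst (snd s)))"

text \<open>Writes originating at d, committed (at the leader) in group (d,p), in
  commit order: this is the contents ever put on the FIFO channels from d.\<close>
definition sent_writes :: "('c, 'k, 'v) state \<Rightarrow> nat \<Rightarrow> nat \<Rightarrow> ('k, 'v) version list" where
  "sent_writes \<sigma> d p = filter (\<lambda>v. vdc v = d) (committed \<sigma> (d, p, 0))"

datatype dep_choice = DepZero | DepR | DepW | DepMax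

definition dep_ts :: "('c, 'k, 'v) state \<Rightarrow> 'c \<Rightarrow> dep_choice \<Rightarrow> hlc" where
  "dep_ts \<sigma> c ch = (case ch of DepZero \<Rightarrow> (0, 0) | DepR \<Rightarrow> dtr \<sigma> c | DepW \<Rightarrow> dtw \<sigma> c
                     | DepMax \<Rightarrow> max (dtr \<sigma> c) (dtw \<sigma> c))"

datatype ('c, 'k, 'v) event =
    Skip
  | Commit nat nat nat                 \<comment> \<open>member (d,p,m) commits its next log entry\<close>
  | Forward nat nat nat                \<comment> \<open>leader of (d',p) receives next write from channel d to d'\<close>
  | GetReq 'c 'k nat nat bool bool     \<comment> \<open>client, key, dc d, member m, send hrm column?, send hwm column?\<close>
  | GetResp 'c "('k, 'v) version option"
  | PutReq 'c 'k 'v nat nat dep_choice \<comment> \<open>client, key, value, dc d, physical clock pt, choice of dt\<close>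
  | PutResp 'c

fun step :: "nat \<Rightarrow> nat \<Rightarrow> nat \<Rightarrow> ('k \<Rightarrow> nat) \<Rightarrow>
    ('c, 'k, 'v) state \<Rightarrow> ('c, 'k, 'v) event \<Rightarrow> ('c, 'k, 'v) state \<Rightarrow> bool" where
  "step D P R part \<sigma> Skip \<sigma>' = (\<sigma>' = \<sigma>)"
| "step D P R part \<sigma> (Commit d p m) \<sigma>' =
     (let s = (d, p, m); v = rlog \<sigma> (d, p) ! cmt \<sigma> s in
      d < D \<and> p < P \<and> m < R \<and> cmt \<sigma> s < length (rlog \<sigma> (d, p)) \<and>
      \<sigma>' = \<sigma>\<lparr> cmt := (cmt \<sigma>)(s := cmt \<sigma> s + 1),
              sv := (sv \<sigma>)(s := (sv \<sigma> s)(vdc v := vidx v)) \<rparr>)"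
| "step D P R part \<sigma> (Forward d d' p) \<sigma>' =
     (let ws = sent_writes \<sigma> d p; n = fwd \<sigma> (d, d', p) in
      d < D \<and> d' < D \<and> d \<noteq> d' \<and> p < P \<and> n < length ws \<and>
      \<sigma>' = \<sigma>\<lparr> rlog := (rlog \<sigma>)((d', p) := rlog \<sigma> (d', p) @ [ws ! n]),
              fwd := (fwd \<sigma>)((d, d', p) := n + 1) \<rparr>)"
| "step D P R part \<sigma> (GetReq c k d m useR useW) \<sigma>' =
     (let p = part k;
          hrv = (if useR then (\<lambda>i. hrm \<sigma> c (i, p)) else (\<lambda>_. 0));
          hwv = (if useW then (\<lambda>i. hwm \<sigma> c (i, p)) else (\<lambda>_. 0)) in
      pend \<sigma> c = None \<and> d < D \<and> p < P \<and> m < R \<and>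
      \<sigma>' = \<sigma>\<lparr> pend := (pend \<sigma>)(c := Some (PGet (d, p, m) k hrv hwv)) \<rparr>)"
| "step D P R part \<sigma> (GetResp c r) \<sigma>' =
     (\<exists>s k hrv hwv. pend \<sigma> c = Some (PGet s k hrv hwv) \<and>
        (\<forall>i<D. hrv i \<le> sv \<sigma> s i \<and> hwv i \<le> sv \<sigma> s i) \<and>
        (let ch = filter (\<lambda>v. vkey v = k) (committed \<sigma> s); p = fst (snd s) in
         case r of
           None \<Rightarrow> ch = [] \<and> \<sigma>' = \<sigma>\<lparr> pend := (pend \<sigma>)(c := None) \<rparr>
         | Some v \<Rightarrow> v \<in> set ch \<and> (\<forall>u\<in>set ch. vts u \<le> vts v) \<and>
             \<sigma>' = \<sigma>\<lparr> pend := (pend \<sigma>)(c := None),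
                     hrm := (hrm \<sigma>)(c := (hrm \<sigma> c)((vdc v, p) :=
                                 max (hrm \<sigma> c (vdc v, p)) (sv \<sigma> s (vdc v)))),
                     dtr := (dtr \<sigma>)(c := max (dtr \<sigma> c) (vts v)),
                     creads := (creads \<sigma>)(c := insert v (creads \<sigma> c)) \<rparr>))"
| "step D P R part \<sigma> (PutReq c k x d pt ch) \<sigma>' =
     (let p = part k; t = hlc_update (clk \<sigma> (d, p)) pt (dep_ts \<sigma> c ch);
          v = \<lparr> vkey = k, vval = x, vdc = d, vidx = length (rlog \<sigma> (d, p)) + 1, vts = t \<rparr> in
      pend \<sigma> c = None \<and> d < D \<and> p < P \<and> 0 < R \<and>
      \<sigma>' = \<sigma>\<lparr> clk := (clk \<sigma>)((d, p) := t),
              rlog := (rlog \<sigma>)((d, p) := rlog \<sigma> (d, p) @ [v]),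
              pend := (pend \<sigma>)(c := Some (PPut (d, p, 0) v)) \<rparr>)"
| "step D P R part \<sigma> (PutResp c) \<sigma>' =
     (\<exists>s v. pend \<sigma> c = Some (PPut s v) \<and> v \<in> set (committed \<sigma> s) \<and>
        (let d = fst s; p = fst (snd s) in
         \<sigma>' = \<sigma>\<lparr> pend := (pend \<sigma>)(c := None),
                 hwm := (hwm \<sigma>)(c := (hwm \<sigma> c)((d, p) := max (hwm \<sigma> c (d, p)) (sv \<sigma> s d))),
                 dtw := (dtw \<sigma>)(c := max (dtw \<sigma> c) (vts v)) \<rparr>))"

definition is_exec :: "nat \<Rightarrow> nat \<Rightarrow> nat \<Rightarrow> ('k \<Rightarrow> nat) \<Rightarrow>
    (nat \<Rightarrow> ('c, 'k, 'v) state) \<Rightarrow> (nat \<Rightarrow> ('c, 'k, 'v) event) \<Rightarrow> bool" where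
  "is_exec D P R part \<sigma> ev \<longleftrightarrow>
     \<sigma> 0 = init_state \<and> (\<forall>i. step D P R part (\<sigma> i) (ev i) (\<sigma> (Suc i)))"

definition CommittedWrites :: "(nat \<Rightarrow> ('c, 'k, 'v) state) \<Rightarrow> server \<Rightarrow> 'k \<Rightarrow> nat
    \<Rightarrow> ('k, 'v) version list" where
  "CommittedWrites \<sigma> s k t = filter (\<lambda>v. vkey v = k) (committed (\<sigma> t) s)"

definition ClientReads :: "(nat \<Rightarrow> ('c, 'k, 'v) state) \<Rightarrow> 'c \<Rightarrow> 'k \<Rightarrow> nat
    \<Rightarrow> ('k, 'v) version set" where
  "ClientReads \<sigma> c k t = {w \<in> creads (\<sigma> t) c. vkey w = k}"

end

theory Submission
  imports Defs "HOL-Library.Sublist"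
begin


definition Og :: "('c,'k,'v) state \<Rightarrow> nat \<Rightarrow> nat \<Rightarrow> ('k,'v) version list" where
  "Og \<sigma> i p = filter (\<lambda>v. vdc v = i) (rlog \<sigma> (i,p))"

definition invA :: "('c,'k,'v) state \<Rightarrow> bool" where
  "invA \<sigma> = (\<forall>i p. sorted_wrt (\<lambda>a b. vidx a < vidx b) (Og \<sigma> i p) \<and>
      (\<forall>v\<in>set (Og \<sigma> i p). 0 < vidx v \<and> vidx v \<le> length (rlog \<sigma> (i,p))))"
definition invF :: "('c,'k,'v) state \<Rightarrow> bool" where
  "invF \<sigma> = (\<forall>s. cmt \<sigma> s \<le> length (rlog \<sigma> (fst s, fst (snd s))))"
definition invB :: "('c,'k,'v) state \<Rightarrow> bool" where
  "invB \<sigma> = (\<forall>d d' p. d \<noteq> d' \<longrightarrow>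
     filter (\<lambda>v. vdc v = d) (rlog \<sigma> (d',p)) = take (fwd \<sigma> (d,d',p)) (sent_writes \<sigma> d p) \<and>
     fwd \<sigma> (d,d',p) \<le> length (sent_writes \<sigma> d p))"
definition invC :: "('c,'k,'v) state \<Rightarrow> bool" where
  "invC \<sigma> = (\<forall>s i. sv \<sigma> s i = (if filter (\<lambda>v. vdc v = i) (committed \<sigma> s) = [] then 0
       else vidx (last (filter (\<lambda>v. vdc v = i) (committed \<sigma> s)))))"
definition invD :: "nat \<Rightarrow> ('k \<Rightarrow> nat) \<Rightarrow> ('c,'k,'v) state \<Rightarrow> bool" where
  "invD D part \<sigma> = (\<forall>d p v. v \<in> set (rlog \<sigma> (d,p)) \<longrightarrow> part (vkey v) = p \<and> vdc v < D)"
definition invE :: "nat \<Rightarrow> ('k \<Rightarrow> nat) \<Rightarrow> ('c,'k,'v) state \<Rightarrow> bool" where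
  "invE D part \<sigma> = (\<forall>c v. v \<in> creads \<sigma> c \<longrightarrow> vdc v < D \<and>
      vidx v \<le> hrm \<sigma> c (vdc v, part (vkey v)) \<and> v \<in> set (Og \<sigma> (vdc v) (part (vkey v))))"

definition inv where
  "inv D part \<sigma> = (invA \<sigma> \<and> invF \<sigma> \<and> invB \<sigma> \<and> invC \<sigma> \<and> invD D part \<sigma> \<and> invE D part \<sigma>)"

lemma sp:
  assumes "sorted_wrt (\<lambda>a b. vidx a < vidx b) xs" "prefix F xs" "F \<noteq> []" "w \<in> set xs"
    "vidx w \<le> vidx (last F)"
  shows "w \<in> set F"
proof (rule ccontr)
  assume n: "w \<notin> set F"
  obtain G where xs: "xs = F @ G" using assms(2) prefixE by blast
  have "w \<in> set G" using n assms(4) xs by auto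
  moreover have "last F \<in> set F" using assms(3) by simp
  ultimately have "vidx (last F) < vidx w" using assms(1) xs by (auto simp: sorted_wrt_append)
  thus False using assms(5) by simp
qed

lemma sp2:
  assumes "sorted_wrt (\<lambda>a b. vidx a < vidx b) F" "v \<in> set F"
  shows "vidx v \<le> vidx (last F)"
proof -
  have Fne: "F \<noteq> []" using assms(2) by auto
  have F: "F = butlast F @ [last F]" using Fne by simp
  show ?thesis
  proof (cases "v = last F")
    case False
    then have "v \<in> set (butlast F)" using assms(2) F by (metis Un_iff empty_iff empty_set set_ConsD set_append)
    then show ?thesis using assms(1) F by (metis less_imp_le_nat list.set_intros(1) sorted_wrt_append)
  qed simp
qed

lemma Bprime:
  assumes "invB \<sigma>" shows "prefix (filter (\<lambda>v. vdc v = i) (rlog \<sigma> (d,p))) (Og \<sigma> i p)"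
proof (cases "i = d")
  case True then show ?thesis by (simp add: Og_def)
next
  case False
  then have "filter (\<lambda>v. vdc v = i) (rlog \<sigma> (d,p)) = take (fwd \<sigma> (i,d,p)) (sent_writes \<sigma> i p)"
    using assms unfolding invB_def by blast
  moreover have "prefix (sent_writes \<sigma> i p) (Og \<sigma> i p)"
    unfolding sent_writes_def Og_def committed_def
    by (simp add: filter_mono_prefix take_is_prefix)
  ultimately show ?thesis by (metis prefix_order.trans take_is_prefix)
qed

lemma comm_prefix: "prefix (filter (\<lambda>v. vdc v = i) (committed \<sigma> (d,p,m))) (Og \<sigma> i p)"
  if "invB \<sigma>"
  using Bprime[OF that, of i d p] unfolding committed_def
  by (metis filter_mono_prefix prefix_order.trans take_is_prefix fst_conv snd_conv)

lemma L4:
  assumes "invA \<sigma>" "invB \<sigma>" "invC \<sigma>" "w \<in> set (Og \<sigma> i p)" "vidx w \<le> sv \<sigma> (d,p,m) i"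
  shows "w \<in> set (committed \<sigma> (d,p,m))"
proof -
  let ?F = "filter (\<lambda>v. vdc v = i) (committed \<sigma> (d,p,m))"
  have pos: "0 < vidx w" using assms(1,4) unfolding invA_def by blast
  have pf: "prefix ?F (Og \<sigma> i p)" using comm_prefix assms(2) by blast
  have ne: "?F \<noteq> []" using assms(3,5) pos unfolding invC_def by (metis not_less0 le_zero_eq)
  have "sv \<sigma> (d,p,m) i = vidx (last ?F)" using assms(3) ne unfolding invC_def by metis
  then have "w \<in> set ?F" using sp[OF _ pf ne assms(4)] assms(1,5) unfolding invA_def by metis
  then show ?thesis by simp
qed

lemma L5:
  assumes "invA \<sigma>" "invB \<sigma>" "invC \<sigma>" "v \<in> set (committed \<sigma> (d,p,m))"
  shows "vidx v \<le> sv \<sigma> (d,p,m) (vdc v) \<and> v \<in> set (Og \<sigma> (vdc v) p)"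
proof -
  let ?F = "filter (\<lambda>u. vdc u = vdc v) (committed \<sigma> (d,p,m))"
  have pf: "prefix ?F (Og \<sigma> (vdc v) p)" using comm_prefix assms(2) by blast
  have vin: "v \<in> set ?F" using assms(4) by simp
  have "sorted_wrt (\<lambda>a b. vidx a < vidx b) ?F"
    using pf assms(1) unfolding invA_def by (metis prefixE sorted_wrt_append)
  then have "vidx v \<le> vidx (last ?F)" using sp2 vin by blast
  moreover have "sv \<sigma> (d,p,m) (vdc v) = vidx (last ?F)" using assms(3) vin unfolding invC_def
    by (metis empty_iff empty_set)
  moreover have "v \<in> set (Og \<sigma> (vdc v) p)" using pf vin by (meson set_mono_prefix subsetD)
  ultimately show ?thesis by simp
qed


lemma commit_pres:
  assumes "inv D part \<sigma>" "step D P R part \<sigma> (Commit d p m) \<sigma>'"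
  shows "inv D part \<sigma>'"
proof -
  define s0 where "s0 = (d,p,m)"
  define n where "n = cmt \<sigma> s0"
  define v where "v = rlog \<sigma> (d,p) ! n"
  have n: "n < length (rlog \<sigma> (d,p))" and \<sigma>': "\<sigma>' = \<sigma>\<lparr> cmt := (cmt \<sigma>)(s0 := n + 1),
              sv := (sv \<sigma>)(s0 := (sv \<sigma> s0)(vdc v := vidx v)) \<rparr>"
    using assms(2) by (simp_all add: s0_def n_def v_def Let_def)
  have cs0: "committed \<sigma>' s0 = committed \<sigma> s0 @ [v]"
    using n by (simp add: \<sigma>' committed_def s0_def n_def v_def take_Suc_conv_app_nth)
  have cs: "s \<noteq> s0 \<Longrightarrow> committed \<sigma>' s = committed \<sigma> s" for s
    by (simp add: \<sigma>' committed_def)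
  have cpre: "prefix (committed \<sigma> s) (committed \<sigma>' s)" for s
    using cs cs0 by (cases "s = s0") auto
  have A: "invA \<sigma>'" using assms(1) by (simp add: inv_def invA_def Og_def \<sigma>')
  have F: "invF \<sigma>'" using assms(1) n by (simp add: inv_def invF_def \<sigma>' s0_def n_def)
  have B: "invB \<sigma>'" unfolding invB_def
  proof (intro allI impI)
    fix a a' q assume "(a::nat) \<noteq> a'"
    then have h: "filter (\<lambda>v. vdc v = a) (rlog \<sigma> (a',q)) = take (fwd \<sigma> (a,a',q)) (sent_writes \<sigma> a q) \<and>
     fwd \<sigma> (a,a',q) \<le> length (sent_writes \<sigma> a q)" using assms(1) unfolding inv_def invB_def by blast
    have "prefix (sent_writes \<sigma> a q) (sent_writes \<sigma>' a q)"
      unfolding sent_writes_def using cpre filter_mono_prefix by blast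
    then obtain zs where z: "sent_writes \<sigma>' a q = sent_writes \<sigma> a q @ zs" using prefixE by blast
    show "filter (\<lambda>v. vdc v = a) (rlog \<sigma>' (a',q)) = take (fwd \<sigma>' (a,a',q)) (sent_writes \<sigma>' a q) \<and>
     fwd \<sigma>' (a,a',q) \<le> length (sent_writes \<sigma>' a q)"
      using h z by (simp add: \<sigma>')
  qed
  have C: "invC \<sigma>'" unfolding invC_def
  proof (intro allI)
    fix s i
    show "sv \<sigma>' s i = (if filter (\<lambda>v. vdc v = i) (committed \<sigma>' s) = [] then 0
       else vidx (last (filter (\<lambda>v. vdc v = i) (committed \<sigma>' s))))"
    proof (cases "s = s0")
      case True
      have sv': "sv \<sigma>' s0 = (sv \<sigma> s0)(vdc v := vidx v)" by (simp add: \<sigma>')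
      have old: "sv \<sigma> s0 i = (if filter (\<lambda>v. vdc v = i) (committed \<sigma> s0) = [] then 0
       else vidx (last (filter (\<lambda>v. vdc v = i) (committed \<sigma> s0))))"
        using assms(1) unfolding inv_def invC_def by blast
      show ?thesis unfolding True cs0 sv' using old by auto
    next
      case False
      have sv': "sv \<sigma>' s = sv \<sigma> s" using False by (simp add: \<sigma>')
      have old: "sv \<sigma> s i = (if filter (\<lambda>v. vdc v = i) (committed \<sigma> s) = [] then 0
       else vidx (last (filter (\<lambda>v. vdc v = i) (committed \<sigma> s))))"
        using assms(1) unfolding inv_def invC_def by blast
      show ?thesis unfolding cs[OF False] sv' by (rule old)
    qed
  qed
  have D: "invD D part \<sigma>'" using assms(1) by (simp add: inv_def invD_def \<sigma>')
  have E: "invE D part \<sigma>'" using assms(1) by (simp add: inv_def invE_def Og_def \<sigma>')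
  show ?thesis using A F B C D E by (simp add: inv_def)
qed



lemma triv_pres:
  assumes "inv D part \<sigma>" "rlog \<sigma>' = rlog \<sigma>" "cmt \<sigma>' = cmt \<sigma>" "sv \<sigma>' = sv \<sigma>"
    "fwd \<sigma>' = fwd \<sigma>" "hrm \<sigma>' = hrm \<sigma>" "creads \<sigma>' = creads \<sigma>"
  shows "inv D part \<sigma>'"
proof -
  have c: "committed \<sigma>' = committed \<sigma>" using assms by (simp add: committed_def fun_eq_iff)
  have s: "sent_writes \<sigma>' = sent_writes \<sigma>" using c by (simp add: sent_writes_def fun_eq_iff)
  have o: "Og \<sigma>' = Og \<sigma>" using assms by (simp add: Og_def fun_eq_iff)
  show ?thesis using assms(1) unfolding inv_def invA_def invB_def invC_def invD_def invE_def invF_def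
    c s o assms(2-7) by blast
qed

lemma forward_pres:
  assumes "inv D part \<sigma>" "step D P R part \<sigma> (Forward d d' p) \<sigma>'"
  shows "inv D part \<sigma>'"
proof -
  define ws where "ws = sent_writes \<sigma> d p"
  define n where "n = fwd \<sigma> (d,d',p)"
  define w where "w = ws ! n"
  have h: "d < D" "d' < D" "d \<noteq> d'" "n < length ws" and \<sigma>': "\<sigma>' = \<sigma>\<lparr> rlog := (rlog \<sigma>)((d', p) := rlog \<sigma> (d', p) @ [w]),
              fwd := (fwd \<sigma>)((d, d', p) := n + 1) \<rparr>"
    using assms(2) by (simp_all add: ws_def n_def w_def Let_def)
  have I: "invA \<sigma>" "invF \<sigma>" "invB \<sigma>" "invC \<sigma>" "invD D part \<sigma>" "invE D part \<sigma>"
    using assms(1) by (simp_all add: inv_def)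
  have wws: "w \<in> set ws" using h(4) by (simp add: w_def)
  have wd: "vdc w = d" using wws by (simp add: ws_def sent_writes_def)
  have wr: "w \<in> set (rlog \<sigma> (d,p))" using wws unfolding ws_def sent_writes_def committed_def
    by (auto dest: in_set_takeD)
  have rl: "rlog \<sigma>' x = (if x = (d',p) then rlog \<sigma> (d',p) @ [w] else rlog \<sigma> x)" for x
    by (simp add: \<sigma>')
  have cm: "committed \<sigma>' s = committed \<sigma> s" for s
    using I(2) unfolding invF_def committed_def by (cases s) (simp add: \<sigma>')
  have sw: "sent_writes \<sigma>' = sent_writes \<sigma>" by (simp add: sent_writes_def cm fun_eq_iff)
  have og: "Og \<sigma>' i q = Og \<sigma> i q" for i q
    using h(3) wd by (simp add: Og_def rl)
  have A: "invA \<sigma>'" using I(1) unfolding invA_def og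
    by (simp add: rl) (meson le_SucI)
  have F: "invF \<sigma>'" using I(2) unfolding invF_def by (simp add: rl \<sigma>') (meson le_SucI)
  have B: "invB \<sigma>'" unfolding invB_def sw
  proof (intro allI impI)
    fix a a' q assume ne: "(a::nat) \<noteq> a'"
    have h2: "filter (\<lambda>v. vdc v = a) (rlog \<sigma> (a',q)) = take (fwd \<sigma> (a,a',q)) (sent_writes \<sigma> a q) \<and>
     fwd \<sigma> (a,a',q) \<le> length (sent_writes \<sigma> a q)" using I(3) ne unfolding invB_def by blast
    show "filter (\<lambda>v. vdc v = a) (rlog \<sigma>' (a',q)) = take (fwd \<sigma>' (a,a',q)) (sent_writes \<sigma> a q) \<and>
     fwd \<sigma>' (a,a',q) \<le> length (sent_writes \<sigma> a q)"
    proof (cases "(a,a',q) = (d,d',p)")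
      case True
      then have e: "a = d" "a' = d'" "q = p" by auto
      have "take n ws @ [w] = take (Suc n) ws" using h(4) by (simp add: w_def take_Suc_conv_app_nth)
      then show ?thesis using h2 h(4) wd unfolding e by (simp add: rl \<sigma>' ws_def n_def)
    next
      case False
      have f: "fwd \<sigma>' (a,a',q) = fwd \<sigma> (a,a',q)" using False by (auto simp: \<sigma>')
      show ?thesis
      proof (cases "(a',q) = (d',p)")
        case True
        then have "a \<noteq> d" using False by auto
        then show ?thesis using h2 True wd unfolding f by (auto simp: rl)
      next
        case False
        then show ?thesis using h2 unfolding f by (auto simp: rl)
      qed
    qed
  qed
  have C: "invC \<sigma>'" using I(4) unfolding invC_def cm by (simp add: \<sigma>')
  have D: "invD D part \<sigma>'" using I(5) wr h(1) wd unfolding invD_def by (auto simp: rl split: if_splits)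
  have E: "invE D part \<sigma>'" using I(6) unfolding invE_def og by (simp add: \<sigma>')
  show ?thesis using A F B C D E by (simp add: inv_def)
qed


lemma same_ABCDF:
  assumes "rlog \<sigma>' = rlog \<sigma>" "cmt \<sigma>' = cmt \<sigma>" "sv \<sigma>' = sv \<sigma>" "fwd \<sigma>' = fwd \<sigma>"
  shows "invA \<sigma>' = invA \<sigma>" "invB \<sigma>' = invB \<sigma>" "invC \<sigma>' = invC \<sigma>" "invD D part \<sigma>' = invD D part \<sigma>"
    "invF \<sigma>' = invF \<sigma>" "Og \<sigma>' = Og \<sigma>" "committed \<sigma>' = committed \<sigma>"
proof -
  have c: "committed \<sigma>' = committed \<sigma>" using assms by (simp add: committed_def fun_eq_iff)
  have s: "sent_writes \<sigma>' = sent_writes \<sigma>" using c by (simp add: sent_writes_def fun_eq_iff)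
  have o: "Og \<sigma>' = Og \<sigma>" using assms by (simp add: Og_def fun_eq_iff)
  show "invA \<sigma>' = invA \<sigma>" "invB \<sigma>' = invB \<sigma>" "invC \<sigma>' = invC \<sigma>" "invD D part \<sigma>' = invD D part \<sigma>"
    "invF \<sigma>' = invF \<sigma>" "Og \<sigma>' = Og \<sigma>" "committed \<sigma>' = committed \<sigma>"
    unfolding invA_def invB_def invC_def invD_def invF_def c s o assms by simp_all
qed

lemma getresp_pres:
  assumes "inv D part \<sigma>" "step D P R part \<sigma> (GetResp c r) \<sigma>'"
  shows "inv D part \<sigma>'"
proof -
  obtain s k hrv hwv where pe: "pend \<sigma> c = Some (PGet s k hrv hwv)" and
    st: "(let ch = filter (\<lambda>v. vkey v = k) (committed \<sigma> s); p = fst (snd s) in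
         case r of
           None \<Rightarrow> ch = [] \<and> \<sigma>' = \<sigma>\<lparr> pend := (pend \<sigma>)(c := None) \<rparr>
         | Some v \<Rightarrow> v \<in> set ch \<and> (\<forall>u\<in>set ch. vts u \<le> vts v) \<and>
             \<sigma>' = \<sigma>\<lparr> pend := (pend \<sigma>)(c := None),
                     hrm := (hrm \<sigma>)(c := (hrm \<sigma> c)((vdc v, p) :=
                                 max (hrm \<sigma> c (vdc v, p)) (sv \<sigma> s (vdc v)))),
                     dtr := (dtr \<sigma>)(c := max (dtr \<sigma> c) (vts v)),
                     creads := (creads \<sigma>)(c := insert v (creads \<sigma> c)) \<rparr>)"
    using assms(2) by auto
  obtain sd sp sm where s: "s = (sd, sp, sm)" by (cases s) auto
  show ?thesis
  proof (cases r)
    case None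
    then have "\<sigma>' = \<sigma>\<lparr> pend := (pend \<sigma>)(c := None) \<rparr>" using st by (simp add: Let_def)
    then show ?thesis using triv_pres[OF assms(1)] by simp
  next
    case (Some v)
    then have vin: "v \<in> set (committed \<sigma> s)" and vk: "vkey v = k" and
      \<sigma>': "\<sigma>' = \<sigma>\<lparr> pend := (pend \<sigma>)(c := None),
                     hrm := (hrm \<sigma>)(c := (hrm \<sigma> c)((vdc v, sp) :=
                                 max (hrm \<sigma> c (vdc v, sp)) (sv \<sigma> s (vdc v)))),
                     dtr := (dtr \<sigma>)(c := max (dtr \<sigma> c) (vts v)),
                     creads := (creads \<sigma>)(c := insert v (creads \<sigma> c)) \<rparr>"
      using st s by (simp_all add: Let_def)
    have I: "invA \<sigma>" "invF \<sigma>" "invB \<sigma>" "invC \<sigma>" "invD D part \<sigma>" "invE D part \<sigma>"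
      using assms(1) by (simp_all add: inv_def)
    have eq: "rlog \<sigma>' = rlog \<sigma>" "cmt \<sigma>' = cmt \<sigma>" "sv \<sigma>' = sv \<sigma>" "fwd \<sigma>' = fwd \<sigma>"
      by (simp_all add: \<sigma>')
    note S = same_ABCDF[OF eq]
    have vr: "v \<in> set (rlog \<sigma> (sd, sp))" using vin s unfolding committed_def
      by (auto dest: in_set_takeD)
    have vD: "part (vkey v) = sp" "vdc v < D" using I(5) vr unfolding invD_def by blast+
    have L: "vidx v \<le> sv \<sigma> s (vdc v) \<and> v \<in> set (Og \<sigma> (vdc v) sp)"
      using L5[OF I(1) I(3) I(4)] vin s by blast
    have E: "invE D part \<sigma>'" unfolding invE_def S(6)
    proof (intro allI impI)
      fix c' u assume u: "u \<in> creads \<sigma>' c'"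
      have hm: "hrm \<sigma> c' x \<le> hrm \<sigma>' c' x" for x by (simp add: \<sigma>')
      show "vdc u < D \<and> vidx u \<le> hrm \<sigma>' c' (vdc u, part (vkey u)) \<and> u \<in> set (Og \<sigma> (vdc u) (part (vkey u)))"
      proof (cases "c' = c \<and> u = v")
        case True
        then have "hrm \<sigma>' c' (vdc u, part (vkey u)) = max (hrm \<sigma> c (vdc v, sp)) (sv \<sigma> s (vdc v))"
          using vD by (simp add: \<sigma>')
        then show ?thesis using True vD L by auto
      next
        case False
        then have "u \<in> creads \<sigma> c'" using u by (auto simp: \<sigma>' split: if_splits)
        then show ?thesis using I(6) hm unfolding invE_def by (meson le_trans)
      qed
    qed
    show ?thesis using E I unfolding inv_def S by simp
  qed
qed

lemma putreq_pres:
  assumes "inv D part \<sigma>" "step D P R part \<sigma> (PutReq c k x d pt ch) \<sigma>'"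
  shows "inv D part \<sigma>'"
proof -
  define p where "p = part k"
  define t where "t = hlc_update (clk \<sigma> (d, p)) pt (dep_ts \<sigma> c ch)"
  define v where "v = \<lparr> vkey = k, vval = x, vdc = d, vidx = length (rlog \<sigma> (d, p)) + 1, vts = t \<rparr>"
  have h: "d < D" and \<sigma>': "\<sigma>' = \<sigma>\<lparr> clk := (clk \<sigma>)((d, p) := t),
              rlog := (rlog \<sigma>)((d, p) := rlog \<sigma> (d, p) @ [v]),
              pend := (pend \<sigma>)(c := Some (PPut (d, p, 0) v)) \<rparr>"
    using assms(2) by (simp_all add: p_def t_def v_def Let_def)
  have I: "invA \<sigma>" "invF \<sigma>" "invB \<sigma>" "invC \<sigma>" "invD D part \<sigma>" "invE D part \<sigma>"
    using assms(1) by (simp_all add: inv_def)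
  have vd: "vdc v = d" "vidx v = length (rlog \<sigma> (d, p)) + 1" "part (vkey v) = p"
    by (simp_all add: v_def p_def)
  have rl: "rlog \<sigma>' y = (if y = (d,p) then rlog \<sigma> (d,p) @ [v] else rlog \<sigma> y)" for y
    by (simp add: \<sigma>')
  have cm: "committed \<sigma>' s = committed \<sigma> s" for s
    using I(2) unfolding invF_def committed_def by (cases s) (simp add: \<sigma>')
  have sw: "sent_writes \<sigma>' = sent_writes \<sigma>" by (simp add: sent_writes_def cm fun_eq_iff)
  have og: "Og \<sigma>' i q = (if (i,q) = (d,p) then Og \<sigma> i q @ [v] else Og \<sigma> i q)" for i q
    using vd by (auto simp: Og_def rl)
  have A: "invA \<sigma>'" unfolding invA_def
  proof (intro allI)
    fix i q
    show "sorted_wrt (\<lambda>a b. vidx a < vidx b) (Og \<sigma>' i q) \<and>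
      (\<forall>u\<in>set (Og \<sigma>' i q). 0 < vidx u \<and> vidx u \<le> length (rlog \<sigma>' (i,q)))"
    proof (cases "(i,q) = (d,p)")
      case True
      have o: "sorted_wrt (\<lambda>a b. vidx a < vidx b) (Og \<sigma> d p)"
        "\<forall>u\<in>set (Og \<sigma> d p). 0 < vidx u \<and> vidx u \<le> length (rlog \<sigma> (d,p))"
        using I(1) unfolding invA_def by blast+
      then show ?thesis using True vd unfolding og rl
        by (auto simp: sorted_wrt_append)
    next
      case False
      then show ?thesis using I(1) unfolding invA_def og rl by auto
    qed
  qed
  have F: "invF \<sigma>'" using I(2) unfolding invF_def by (simp add: rl \<sigma>') (meson le_SucI)
  have B: "invB \<sigma>'" unfolding invB_def sw
  proof (intro allI impI)
    fix a a' q assume ne: "(a::nat) \<noteq> a'"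
    have h2: "filter (\<lambda>v. vdc v = a) (rlog \<sigma> (a',q)) = take (fwd \<sigma> (a,a',q)) (sent_writes \<sigma> a q) \<and>
     fwd \<sigma> (a,a',q) \<le> length (sent_writes \<sigma> a q)" using I(3) ne unfolding invB_def by blast
    show "filter (\<lambda>v. vdc v = a) (rlog \<sigma>' (a',q)) = take (fwd \<sigma>' (a,a',q)) (sent_writes \<sigma> a q) \<and>
     fwd \<sigma>' (a,a',q) \<le> length (sent_writes \<sigma> a q)"
      using h2 ne vd by (auto simp: rl \<sigma>')
  qed
  have C: "invC \<sigma>'" using I(4) unfolding invC_def cm by (simp add: \<sigma>')
  have D: "invD D part \<sigma>'" using I(5) h vd unfolding invD_def by (auto simp: rl split: if_splits)
  have E: "invE D part \<sigma>'" unfolding invE_def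
  proof (intro allI impI)
    fix c' u assume u: "u \<in> creads \<sigma>' c'"
    then have "u \<in> creads \<sigma> c'" by (simp add: \<sigma>')
    then show "vdc u < D \<and> vidx u \<le> hrm \<sigma>' c' (vdc u, part (vkey u)) \<and> u \<in> set (Og \<sigma>' (vdc u) (part (vkey u)))"
      using I(6) unfolding invE_def og by (auto simp: \<sigma>')
  qed
  show ?thesis using A F B C D E by (simp add: inv_def)
qed


lemma inv_step:
  assumes "inv D part \<sigma>" "step D P R part \<sigma> e \<sigma>'"
  shows "inv D part \<sigma>'"
proof (cases e)
  case Skip then show ?thesis using assms by simp
next
  case (Commit d p m) show ?thesis by (rule commit_pres[OF assms(1) assms(2)[unfolded Commit]])
next
  case (Forward d d' p) show ?thesis by (rule forward_pres[OF assms(1) assms(2)[unfolded Forward]])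
next
  case (GetReq c k d m uR uW)
  then have "rlog \<sigma>' = rlog \<sigma> \<and> cmt \<sigma>' = cmt \<sigma> \<and> sv \<sigma>' = sv \<sigma> \<and> fwd \<sigma>' = fwd \<sigma> \<and> hrm \<sigma>' = hrm \<sigma> \<and> creads \<sigma>' = creads \<sigma>"
    using assms(2) by (auto simp: Let_def)
  then show ?thesis using triv_pres[OF assms(1)] by blast
next
  case (GetResp c r) show ?thesis by (rule getresp_pres[OF assms(1) assms(2)[unfolded GetResp]])
next
  case (PutReq c k x d pt ch) show ?thesis by (rule putreq_pres[OF assms(1) assms(2)[unfolded PutReq]])
next
  case (PutResp c)
  then have "rlog \<sigma>' = rlog \<sigma> \<and> cmt \<sigma>' = cmt \<sigma> \<and> sv \<sigma>' = sv \<sigma> \<and> fwd \<sigma>' = fwd \<sigma> \<and> hrm \<sigma>' = hrm \<sigma> \<and> creads \<sigma>' = creads \<sigma>"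
    using assms(2) by (auto simp: Let_def)
  then show ?thesis using triv_pres[OF assms(1)] by blast
qed

lemma inv_init: "inv D part init_state"
  by (simp add: inv_def invA_def invB_def invC_def invD_def invE_def invF_def Og_def init_state_def
      committed_def sent_writes_def)

lemma inv_all: assumes "is_exec D P R part \<sigma> ev" shows "inv D part (\<sigma> n)"
proof (induction n)
  case 0 then show ?case using assms inv_init unfolding is_exec_def by simp
next
  case (Suc n) then show ?case using assms inv_step unfolding is_exec_def by blast
qed

lemma rlog_step:
  assumes "step D P R part \<sigma> e \<sigma>'" shows "prefix (rlog \<sigma> x) (rlog \<sigma>' x)"
proof (cases e)
  case (GetResp c r)
  then obtain s k hrv hwv where
    st: "(let ch = filter (\<lambda>v. vkey v = k) (committed \<sigma> s); p = fst (snd s) in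
         case r of
           None \<Rightarrow> ch = [] \<and> \<sigma>' = \<sigma>\<lparr> pend := (pend \<sigma>)(c := None) \<rparr>
         | Some v \<Rightarrow> v \<in> set ch \<and> (\<forall>u\<in>set ch. vts u \<le> vts v) \<and>
             \<sigma>' = \<sigma>\<lparr> pend := (pend \<sigma>)(c := None),
                     hrm := (hrm \<sigma>)(c := (hrm \<sigma> c)((vdc v, p) :=
                                 max (hrm \<sigma> c (vdc v, p)) (sv \<sigma> s (vdc v)))),
                     dtr := (dtr \<sigma>)(c := max (dtr \<sigma> c) (vts v)),
                     creads := (creads \<sigma>)(c := insert v (creads \<sigma> c)) \<rparr>)"
    using assms by auto
  then show ?thesis by (cases r) (auto simp: Let_def)
qed (use assms in \<open>auto simp: Let_def\<close>)

lemma rlog_mono: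
  assumes "is_exec D P R part \<sigma> ev" "i \<le> j" shows "prefix (rlog (\<sigma> i) x) (rlog (\<sigma> j) x)"
  using assms(2)
proof (induction j rule: dec_induct)
  case base then show ?case by simp
next
  case (step n)
  then show ?case using rlog_step assms(1) unfolding is_exec_def by (metis prefix_order.trans)
qed

lemma pend_keep:
  assumes "step D P R part \<sigma> e \<sigma>'" "pend \<sigma> c = Some (PGet s k h w)" "\<forall>r. e \<noteq> GetResp c r"
  shows "pend \<sigma>' c = pend \<sigma> c"
proof (cases e)
  case (GetResp c' r)
  then have ne: "c' \<noteq> c" using assms(3) by auto
  obtain s k hrv hwv where
    st: "(let ch = filter (\<lambda>v. vkey v = k) (committed \<sigma> s); p = fst (snd s) in
         case r of
           None \<Rightarrow> ch = [] \<and> \<sigma>' = \<sigma>\<lparr> pend := (pend \<sigma>)(c' := None) \<rparr>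
         | Some v \<Rightarrow> v \<in> set ch \<and> (\<forall>u\<in>set ch. vts u \<le> vts v) \<and>
             \<sigma>' = \<sigma>\<lparr> pend := (pend \<sigma>)(c' := None),
                     hrm := (hrm \<sigma>)(c' := (hrm \<sigma> c')((vdc v, p) :=
                                 max (hrm \<sigma> c' (vdc v, p)) (sv \<sigma> s (vdc v)))),
                     dtr := (dtr \<sigma>)(c' := max (dtr \<sigma> c') (vts v)),
                     creads := (creads \<sigma>)(c' := insert v (creads \<sigma> c')) \<rparr>)"
    using assms(1) GetResp by auto
  then show ?thesis using ne by (cases r) (auto simp: Let_def)
qed (use assms in \<open>auto simp: Let_def\<close>)


theorem mainTheorem2:
  fixes D P R :: nat and part :: "'k \<Rightarrow> nat"
    and \<sigma> :: "nat \<Rightarrow> ('c, 'k, 'v) state" and ev :: "nat \<Rightarrow> ('c, 'k, 'v) event"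
    and c :: 'c and k :: 'k and d m :: nat and useW :: bool and t t' :: nat
    and r :: "('k, 'v) version option"
  assumes "\<forall>k. part k < P"
    and "is_exec D P R part \<sigma> ev"
    and "ev t = GetReq c k d m True useW"
    and "t < t'"
    and "ev t' = GetResp c r"
    and "\<forall>j. t < j \<and> j < t' \<longrightarrow> (\<forall>r'. ev j \<noteq> GetResp c r')"
  shows "\<forall>w \<in> ClientReads \<sigma> c k t. w \<in> set (CommittedWrites \<sigma> (d, part k, m) k t')"
proof
  fix w assume w: "w \<in> ClientReads \<sigma> c k t"
  have stp: "step D P R part (\<sigma> i) (ev i) (\<sigma> (Suc i))" for i using assms(2) unfolding is_exec_def by blast
  define hrv where "hrv = (\<lambda>i. hrm (\<sigma> t) c (i, part k))"
  define hwv where "hwv = (if useW then (\<lambda>i. hwm (\<sigma> t) c (i, part k)) else (\<lambda>_. 0))"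
  define s where "s = (d, part k, m)"
  have p0: "pend (\<sigma> (Suc t)) c = Some (PGet s k hrv hwv)"
    using stp[of t] assms(3) by (simp add: Let_def hrv_def hwv_def s_def)
  have pj: "Suc t \<le> j \<Longrightarrow> j \<le> t' \<Longrightarrow> pend (\<sigma> j) c = Some (PGet s k hrv hwv)" for j
  proof (induction j rule: dec_induct)
    case base then show ?case using p0 by simp
  next
    case (step n)
    then have "\<forall>r'. ev n \<noteq> GetResp c r'" using assms(6) by auto
    then show ?case using pend_keep[OF stp[of n] step.IH] step by simp
  qed
  have pt': "pend (\<sigma> t') c = Some (PGet s k hrv hwv)" using pj assms(4) by simp
  have "\<forall>i<D. hrv i \<le> sv (\<sigma> t') s i"
    using stp[of t'] assms(5) pt' by auto
  have I: "inv D part (\<sigma> t)" "inv D part (\<sigma> t')" using inv_all[OF assms(2)] by blast+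
  have wc: "w \<in> creads (\<sigma> t) c" "vkey w = k" using w unfolding ClientReads_def by auto
  then have e: "vdc w < D" "vidx w \<le> hrv (vdc w)" "w \<in> set (Og (\<sigma> t) (vdc w) (part k))"
    using I(1) unfolding inv_def invE_def hrv_def by blast+
  have "prefix (Og (\<sigma> t) (vdc w) (part k)) (Og (\<sigma> t') (vdc w) (part k))"
    unfolding Og_def using rlog_mono[OF assms(2)] assms(4) filter_mono_prefix less_imp_le by blast
  then have w2: "w \<in> set (Og (\<sigma> t') (vdc w) (part k))" using e(3) by (meson set_mono_prefix subsetD)
  have "vidx w \<le> sv (\<sigma> t') (d, part k, m) (vdc w)"
    using \<open>\<forall>i<D. hrv i \<le> sv (\<sigma> t') s i\<close> e(1,2) s_def by (meson le_trans)
  then have "w \<in> set (committed (\<sigma> t') (d, part k, m))"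
    using L4[OF _ _ _ w2] I(2) unfolding inv_def by blast
  then show "w \<in> set (CommittedWrites \<sigma> (d, part k, m) k t')"
    using wc(2) by (simp add: CommittedWrites_def)
qed

end
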